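(* Let $n\ge 8$, let $f:\{0,1\}^n\to\{0,1\}$ be fully sensitive at $0$, and let $p$ be its symmetrization polynomial. Then \[ \sup_{x\in[0,n]} |p^{(4)}(x)| \geq \frac{1}{6}. \] Moreover, the only polynomial for which this inequality is tight is \[ \tilde{p}(x) = -\frac{x^{4}}{144}+\frac{5 x^{3}}{36}-\frac{125 x^{2}}{144}+\frac{125 x}{72}. \]
   Context: $f$ is fully sensitive at $0$ if $f(0^n)=0$ and $f(e_i)=1$ for every $i=1,\dots,n$ ($e_i$ the $i$-th unit vector). Let $q$ be the unique multilinear real polynomial agreeing with $f$ on $\{0,1\}^n$, of degree $d(f)$. The symmetrization polynomial of $f$ is the univariate real polynomial $p$ of degree at most $d(f)$ with $p(x_1+\dots+x_n)=\frac{1}{n!}\sum_{\pi\in S_n} q(\pi(x))$ for all $x\in\{0,1\}^n$ ($\pi(x)$ permutes coordinates); equivalently $p(k)$, $k=0,\dots,n$, is the fraction of inputs of Hamming weight $k$ on which $f=1$. $p^{(4)}$ is the fourth derivative. *)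

theory Defs
  imports "HOL-Analysis.Analysis" "HOL-Computational_Algebra.Polynomial"
begin

(* Boolean cube {0,1}^n: an input x is identified with its support S = {i. x_i = 1},
   a subset of {0..<n}; Hamming weight = card S; unit vector e_i = {i}, 0^n = {}. *)

definition fully_sensitive_at_0 :: "nat \<Rightarrow> (nat set \<Rightarrow> bool) \<Rightarrow> bool" where
  "fully_sensitive_at_0 n f \<longleftrightarrow> \<not> f {} \<and> (\<forall>i<n. f {i})"

definition weight_fraction :: "nat \<Rightarrow> (nat set \<Rightarrow> bool) \<Rightarrow> nat \<Rightarrow> real" where
  "weight_fraction n f k =
     real (card {S. S \<subseteq> {0..<n} \<and> card S = k \<and> f S}) / real (n choose k)"

definition sym_poly :: "nat \<Rightarrow> (nat set \<Rightarrow> bool) \<Rightarrow> real poly" where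
  "sym_poly n f = (THE p. degree p \<le> n \<and>
      (\<forall>k\<le>n. poly p (real k) = weight_fraction n f k))"

definition p_tilde :: "real poly" where
  "p_tilde = [:0, 125/72, -125/144, 5/36, -1/144:]"

end

theory Submission
  imports Defs
begin

lemma rolle_poly:
  fixes p :: "real poly"
  assumes "a < b" "poly p a = 0" "poly p b = 0"
  shows "\<exists>z. a < z \<and> z < b \<and> poly (pderiv p) z = 0"
  using poly_MVT[OF assms(1), of p] assms by auto

lemma rolle4:
  fixes h :: "real poly"
  assumes "x1 < x2" "x2 < x3" "x3 < x4" "x4 < x5"
    and "poly h x1 = 0" "poly h x2 = 0" "poly h x3 = 0" "poly h x4 = 0" "poly h x5 = 0"
  shows "\<exists>z. x1 < z \<and> z < x5 \<and> poly ((pderiv ^^ 4) h) z = 0"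
proof -
  obtain y1 where y1: "x1 < y1" "y1 < x2" "poly (pderiv h) y1 = 0"
    using rolle_poly[of x1 x2 h] assms by blast
  obtain y2 where y2: "x2 < y2" "y2 < x3" "poly (pderiv h) y2 = 0"
    using rolle_poly[of x2 x3 h] assms by blast
  obtain y3 where y3: "x3 < y3" "y3 < x4" "poly (pderiv h) y3 = 0"
    using rolle_poly[of x3 x4 h] assms by blast
  obtain y4 where y4: "x4 < y4" "y4 < x5" "poly (pderiv h) y4 = 0"
    using rolle_poly[of x4 x5 h] assms by blast
  have "y1 < y2" "y2 < y3" "y3 < y4" using y1 y2 y3 y4 by auto
  obtain z1 where z1: "y1 < z1" "z1 < y2" "poly (pderiv (pderiv h)) z1 = 0"
    using rolle_poly[of y1 y2 "pderiv h"] y1 y2 \<open>y1 < y2\<close> by blast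
  obtain z2 where z2: "y2 < z2" "z2 < y3" "poly (pderiv (pderiv h)) z2 = 0"
    using rolle_poly[of y2 y3 "pderiv h"] y2 y3 \<open>y2 < y3\<close> by blast
  obtain z3 where z3: "y3 < z3" "z3 < y4" "poly (pderiv (pderiv h)) z3 = 0"
    using rolle_poly[of y3 y4 "pderiv h"] y3 y4 \<open>y3 < y4\<close> by blast
  have "z1 < z2" "z2 < z3" using z1 z2 z3 by auto
  obtain u1 where u1: "z1 < u1" "u1 < z2" "poly (pderiv (pderiv (pderiv h))) u1 = 0"
    using rolle_poly[of z1 z2 "pderiv (pderiv h)"] z1 z2 \<open>z1 < z2\<close> by blast
  obtain u2 where u2: "z2 < u2" "u2 < z3" "poly (pderiv (pderiv (pderiv h))) u2 = 0"
    using rolle_poly[of z2 z3 "pderiv (pderiv h)"] z2 z3 \<open>z2 < z3\<close> by blast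
  have "u1 < u2" using u1 u2 by auto
  obtain v where v: "u1 < v" "v < u2" "poly (pderiv (pderiv (pderiv (pderiv h)))) v = 0"
    using rolle_poly[of u1 u2 "pderiv (pderiv (pderiv h))"] u1 u2 \<open>u1 < u2\<close> by blast
  have "x1 < v" "v < x5" using v u1 u2 z1 z2 z3 y1 y2 y3 y4 by auto
  then show ?thesis using v(3)
    by (intro exI[of _ v]) (auto simp: eval_nat_numeral)
qed

lemma d4_lin: "(pderiv ^^ k) (p - q) = (pderiv ^^ k) p - (pderiv ^^ k) (q :: real poly)"
  by (induction k) (auto simp: pderiv_diff)
lemma d4_add: "(pderiv ^^ k) (p + q) = (pderiv ^^ k) p + (pderiv ^^ k) (q :: real poly)"
  by (induction k) (auto simp: pderiv_add)
lemma d4_smult: "(pderiv ^^ k) (smult c p) = smult c ((pderiv ^^ k) (p :: real poly))"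
  by (induction k) (auto simp: pderiv_smult)

lemma d4_quartic: "(pderiv ^^ 4) [:a, b, c, d, 1::real:] = [:24:]"
  by (simp add: eval_nat_numeral pderiv_pCons)

lemma d4_tilde: "(pderiv ^^ 4) p_tilde = [:-1/6:]"
  by (simp add: p_tilde_def eval_nat_numeral pderiv_pCons)

lemma key:
  fixes p :: "real poly"
  assumes d: "\<forall>x\<in>{0..8}. poly ((pderiv^^4) p) x \<ge> -1/6"
    and p0: "poly p 0 = 0" and p1: "poly p 1 = 1" and p2: "poly p 2 \<le> 1"
    and p5: "poly p 5 \<ge> 0" and p8: "poly p 8 \<le> 1"
  shows "p = p_tilde"
proof -
  define r where "r = p - p_tilde"
  have dr: "poly ((pderiv^^4) r) x \<ge> 0" if "0 \<le> x" "x \<le> 8" for x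
  proof -
    have "-1/6 \<le> poly ((pderiv^^4) p) x" using d that by auto
    thus ?thesis by (simp add: r_def d4_lin d4_tilde)
  qed
  define L2 :: "real poly" where "L2 = [:0,-40,53,-14,1:]"
  define L5 :: "real poly" where "L5 = [:0,-16,26,-11,1:]"
  define L8 :: "real poly" where "L8 = [:0,-10,17,-8,1:]"
  have L2e: "poly L2 x = x*(x-1)*(x-5)*(x-8)" for x by (simp add: L2_def algebra_simps)
  have L5e: "poly L5 x = x*(x-1)*(x-2)*(x-8)" for x by (simp add: L5_def algebra_simps)
  have L8e: "poly L8 x = x*(x-1)*(x-2)*(x-5)" for x by (simp add: L8_def algebra_simps)
  have D2: "(pderiv^^4) L2 = [:24:]" "(pderiv^^4) L5 = [:24:]" "(pderiv^^4) L8 = [:24:]"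
    unfolding L2_def L5_def L8_def by (simp_all only: d4_quartic)
  have pt: "poly p_tilde 0 = 0" "poly p_tilde 1 = 1" "poly p_tilde 2 = 1" "poly p_tilde 5 = 0" "poly p_tilde 8 = 1"
    by (simp_all add: p_tilde_def)
  define v2 where "v2 = poly r 2"
  define v5 where "v5 = poly r 5"
  define v8 where "v8 = poly r 8"
  have r0: "poly r 0 = 0" "poly r 1 = 0" using p0 p1 pt by (simp_all add: r_def)
  have v: "v2 \<le> 0" "v5 \<ge> 0" "v8 \<le> 0" using p2 p5 p8 pt by (simp_all add: r_def v2_def v5_def v8_def)
  define h where "h = r - (smult (v2/36) L2 + smult (v5/(-180)) L5 + smult (v8/1008) L8)"
  have "\<exists>z. 0 < z \<and> z < 8 \<and> poly ((pderiv ^^ 4) h) z = 0"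
    by (rule rolle4[of 0 1 2 5 8]) (simp_all add: h_def L2e L5e L8e r0 v2_def v5_def v8_def)
  then obtain z where z: "0 < z" "z < 8" "poly ((pderiv ^^ 4) h) z = 0" by blast
  have "poly ((pderiv ^^ 4) r) z = 24 * (v2/36 - v5/180 + v8/1008)"
    using z(3) by (simp add: h_def d4_lin d4_add d4_smult D2)
  moreover have "poly ((pderiv ^^ 4) r) z \<ge> 0" using dr z by simp
  ultimately have "0 \<le> 24 * (v2 / 36 - v5 / 180 + v8 / 1008)" by linarith
  hence "0 \<le> 140 * v2 - 28 * v5 + 5 * v8" by (simp add: field_simps)
  hence "v2 = 0 \<and> v5 = 0 \<and> v8 = 0" using v by linarith
  hence r2: "poly r 2 = 0" "poly r 5 = 0" "poly r 8 = 0" by (auto simp add: v2_def v5_def v8_def)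
  have rt: "poly r t = 0" if t: "5 < t" "t < 8" for t
  proof -
    have w8: "poly L8 t > 0" using t by (simp add: L8e)
    have w5: "poly L5 t < 0" using t by (simp add: L5e mult_pos_neg)
    define c1 where "c1 = poly r t / poly L8 t"
    define c2 where "c2 = poly r t / poly L5 t"
    have "\<exists>z. 0 < z \<and> z < t \<and> poly ((pderiv ^^ 4) (r - smult c1 L8)) z = 0"
      by (rule rolle4[of 0 1 2 5 t]) (use t w8 in \<open>simp_all add: L8e r0 r2 c1_def\<close>)
    then obtain z1 where z1: "0 < z1" "z1 < t" "poly ((pderiv ^^ 4) (r - smult c1 L8)) z1 = 0" by blast
    have "c1 \<ge> 0" using z1 dr[of z1] t by (simp add: d4_lin d4_smult D2)
    hence ge: "poly r t \<ge> 0" using w8 by (simp add: c1_def zero_le_divide_iff)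
    have "\<exists>z. 0 < z \<and> z < 8 \<and> poly ((pderiv ^^ 4) (r - smult c2 L5)) z = 0"
      by (rule rolle4[of 0 1 2 t 8]) (use t w5 in \<open>simp_all add: L5e r0 r2 c2_def\<close>)
    then obtain z2 where z2: "0 < z2" "z2 < 8" "poly ((pderiv ^^ 4) (r - smult c2 L5)) z2 = 0" by blast
    have "c2 \<ge> 0" using z2 dr[of z2] by (simp add: d4_lin d4_smult D2)
    hence "poly r t \<le> 0" using w5 by (simp add: c2_def zero_le_divide_iff)
    with ge show ?thesis by simp
  qed
  have "r = 0"
  proof (rule ccontr)
    assume "r \<noteq> 0"
    hence "finite {x. poly r x = 0}" by (rule poly_roots_finite)
    moreover have "{5<..<(8::real)} \<subseteq> {x. poly r x = 0}" using rt by auto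
    ultimately have "finite {5<..<(8::real)}" by (rule finite_subset[rotated])
    thus False using infinite_Ioo[of "5::real" 8] by simp
  qed
  thus ?thesis by (simp add: r_def)
qed

lemma lagrange_exists:
  fixes v :: "nat \<Rightarrow> real"
  shows "\<exists>p. degree p \<le> n \<and> (\<forall>k\<le>n. poly p (real k) = v k)"
proof -
  define B where "B k = (\<Prod>j\<in>{0..n}-{k}. smult (1/(real k - real j)) [:-real j, 1:])" for k
  define p where "p = (\<Sum>k\<in>{0..n}. smult (v k) (B k))"
  have degB: "degree (B k) \<le> n" if "k \<le> n" for k
  proof -
    have "degree (B k) \<le> sum (degree \<circ> (\<lambda>j. smult (1/(real k - real j)) [:-real j, 1:])) ({0..n}-{k})"
      unfolding B_def by (rule degree_prod_sum_le) simp
    also have "\<dots> \<le> sum (\<lambda>j. 1) ({0..n}-{k})"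
      by (rule sum_mono) (simp add: degree_smult_le)
    also have "\<dots> = n" using that by simp
    finally show ?thesis .
  qed
  have "degree p \<le> n" unfolding p_def
    by (rule degree_sum_le) (use degB in auto)
  moreover have "poly p (real k) = v k" if "k \<le> n" for k
  proof -
    have B1: "poly (B k) (real k) = 1"
    proof -
      have "poly (smult (1/(real k - real j)) [:-real j,1:]) (real k) = 1" if "j \<noteq> k" for j
      proof -
        have nz: "real k - real j \<noteq> 0" using that by simp
        have e: "poly [:-real j,1:] (real k) = real k - real j" by simp
        show ?thesis using nz by (simp only: poly_smult e) simp
      qed
      thus ?thesis unfolding B_def poly_prod by (intro prod.neutral) blast
    qed
    have B0: "poly (B i) (real k) = 0" if i: "i \<le> n" "i \<noteq> k" for i
    proof -
      have kin: "k \<in> {0..n}-{i}" using i \<open>k \<le> n\<close> by auto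
      show ?thesis unfolding B_def poly_prod
        by (rule prod_zero) (simp, rule bexI[OF _ kin], simp)
    qed
    have "poly p (real k) = (\<Sum>i\<in>{0..n}. v i * poly (B i) (real k))"
      by (simp add: p_def poly_sum)
    also have "\<dots> = v k * poly (B k) (real k) + (\<Sum>i\<in>{0..n}-{k}. v i * poly (B i) (real k))"
      by (rule sum.remove) (use that in auto)
    also have "(\<Sum>i\<in>{0..n}-{k}. v i * poly (B i) (real k)) = 0"
      by (rule sum.neutral) (use B0 in auto)
    finally show ?thesis using B1 by simp
  qed
  ultimately show ?thesis by blast
qed

lemma sym_poly_prop:
  shows "degree (sym_poly n f) \<le> n \<and> (\<forall>k\<le>n. poly (sym_poly n f) (real k) = weight_fraction n f k)"
proof -
  obtain p where p: "degree p \<le> n \<and> (\<forall>k\<le>n. poly p (real k) = weight_fraction n f k)"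
    using lagrange_exists by blast
  have uniq: "q = p" if q: "degree q \<le> n \<and> (\<forall>k\<le>n. poly q (real k) = weight_fraction n f k)" for q
  proof (rule poly_eqI_degree[of "real ` {0..n}"])
    show "poly q x = poly p x" if "x \<in> real ` {0..n}" for x using that p q by auto
    have "card (real ` {0..n}) = n + 1" by (subst card_image) (auto simp: inj_on_def)
    thus "degree q < card (real ` {0..n})" "degree p < card (real ` {0..n})" using p q by auto
  qed
  show ?thesis unfolding sym_poly_def
    by (rule theI[of _ p]) (rule p, erule uniq)
qed

lemma wf_bounds:
  assumes "k \<le> n"
  shows "0 \<le> weight_fraction n f k \<and> weight_fraction n f k \<le> 1"
proof -
  have "card {S. S \<subseteq> {0..<n} \<and> card S = k \<and> f S} \<le> card {S. S \<subseteq> {0..<n} \<and> card S = k}"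
    by (rule card_mono) auto
  also have "\<dots> = n choose k" using n_subsets[of "{0..<n}" k] by simp
  finally have "real (card {S. S \<subseteq> {0..<n} \<and> card S = k \<and> f S}) \<le> real (n choose k)" by simp
  moreover have "n choose k > 0" using assms by simp
  ultimately show ?thesis unfolding weight_fraction_def by (simp add: divide_le_eq_1)
qed

lemma wf0:
  assumes "fully_sensitive_at_0 n f"
  shows "weight_fraction n f 0 = 0"
proof -
  have "{S. S \<subseteq> {0..<n} \<and> card S = 0 \<and> f S} = {}"
  proof -
    have "S = {}" if "S \<subseteq> {0..<n}" "card S = 0" for S :: "nat set"
      using that finite_subset[OF that(1)] by (metis card_0_eq finite_atLeastLessThan)
    thus ?thesis using assms unfolding fully_sensitive_at_0_def by blast
  qed
  thus ?thesis by (simp add: weight_fraction_def)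
qed

lemma wf1:
  assumes "fully_sensitive_at_0 n f" "n \<ge> 1"
  shows "weight_fraction n f 1 = 1"
proof -
  have "{S. S \<subseteq> {0..<n} \<and> card S = 1 \<and> f S} = {S. S \<subseteq> {0..<n} \<and> card S = 1}"
  proof -
    have "f S" if S: "S \<subseteq> {0..<n}" "card S = 1" for S :: "nat set"
    proof -
      obtain i where "S = {i}" using S(2) card_1_singleton_iff[of S] by auto
      thus ?thesis using S(1) assms(1) unfolding fully_sensitive_at_0_def by auto
    qed
    thus ?thesis by blast
  qed
  moreover have "card {S. S \<subseteq> {0..<n} \<and> card S = 1} = n"
    using n_subsets[of "{0..<n}" 1] by simp
  ultimately have c: "card {S. S \<subseteq> {0..<n} \<and> card S = 1 \<and> f S} = n" by (simp only:)
  have "weight_fraction n f 1 = real n / real (n choose 1)"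
    unfolding weight_fraction_def c by (rule refl)
  also have "\<dots> = 1" using assms(2) by (simp add: choose_one)
  finally show ?thesis .
qed


theorem theorem10:
  fixes n :: nat and f :: "nat set \<Rightarrow> bool"
  assumes "n \<ge> 8" and "fully_sensitive_at_0 n f"
  shows "(SUP x\<in>{0..real n}. \<bar>poly ((pderiv ^^ 4) (sym_poly n f)) x\<bar>) \<ge> 1/6
         \<and> ((SUP x\<in>{0..real n}. \<bar>poly ((pderiv ^^ 4) (sym_poly n f)) x\<bar>) = 1/6
              \<longrightarrow> sym_poly n f = p_tilde)"
proof -
  define M where "M = (SUP x\<in>{0..real n}. \<bar>poly ((pderiv ^^ 4) (sym_poly n f)) x\<bar>)"
  have pv: "poly (sym_poly n f) (real k) = weight_fraction n f k" if "k \<le> n" for k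
    using sym_poly_prop[of n f] that by blast
  have P0: "poly (sym_poly n f) 0 = 0" using pv[of 0] wf0[OF assms(2)] by simp
  have P1: "poly (sym_poly n f) 1 = 1" using pv[of 1] wf1[OF assms(2)] assms(1) by simp
  have P2: "poly (sym_poly n f) 2 \<le> 1" using pv[of 2] wf_bounds[of 2 n f] assms(1) by simp
  have P5: "poly (sym_poly n f) 5 \<ge> 0" using pv[of 5] wf_bounds[of 5 n f] assms(1) by simp
  have P8: "poly (sym_poly n f) 8 \<le> 1" using pv[of 8] wf_bounds[of 8 n f] assms(1) by simp
  have cont: "continuous_on {0..real n} (\<lambda>x. \<bar>poly ((pderiv ^^ 4) (sym_poly n f)) x\<bar>)"
    by (intro continuous_intros)
  have "compact ((\<lambda>x. \<bar>poly ((pderiv ^^ 4) (sym_poly n f)) x\<bar>) ` {0..real n})"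
    by (rule compact_continuous_image[OF cont]) simp
  hence bdd: "bdd_above ((\<lambda>x. \<bar>poly ((pderiv ^^ 4) (sym_poly n f)) x\<bar>) ` {0..real n})"
    by (intro bounded_imp_bdd_above compact_imp_bounded)
  have ub: "\<bar>poly ((pderiv ^^ 4) (sym_poly n f)) x\<bar> \<le> M" if "x \<in> {0..real n}" for x
    unfolding M_def by (rule cSUP_upper[OF that bdd])
  have kp: "sym_poly n f = p_tilde" if "M \<le> 1/6"
  proof (rule key[OF _ P0 P1 P2 P5 P8], intro ballI)
    fix x :: real assume "x \<in> {0..8}"
    hence "x \<in> {0..real n}" using assms(1) by auto
    hence "\<bar>poly ((pderiv ^^ 4) (sym_poly n f)) x\<bar> \<le> 1/6" using ub that by fastforce
    thus "-1/6 \<le> poly ((pderiv ^^ 4) (sym_poly n f)) x" by linarith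
  qed
  have "M \<ge> 1/6"
  proof (rule ccontr)
    assume "\<not> M \<ge> 1/6"
    hence "M < 1/6" by simp
    hence "sym_poly n f = p_tilde" using kp by simp
    hence "\<bar>poly ((pderiv ^^ 4) (sym_poly n f)) 0\<bar> = 1/6" by (simp add: d4_tilde)
    moreover have "\<bar>poly ((pderiv ^^ 4) (sym_poly n f)) 0\<bar> \<le> M" by (rule ub) simp
    ultimately show False using \<open>M < 1/6\<close> by simp
  qed
  moreover have "M = 1/6 \<longrightarrow> sym_poly n f = p_tilde" using kp by simp
  ultimately show ?thesis unfolding M_def by blast
qed

end
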